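(* Let $R$ be a ring and $G$ a group. If the group ring $RG$ is a DT ring, then $R$ is a DT ring.
   Context: All rings are associative with identity; $U(R)$ is the group of units. $\Delta(R)=\{x\in R: x+u\in U(R)\text{ for all }u\in U(R)\}$. $\mathrm{Tr}(R)=\{x\in R: x^3=x\}$. A ring $R$ is a DT ring if every $r\in R$ can be written $r=e+d$ with $e\in\mathrm{Tr}(R)$ and $d\in\Delta(R)$. $RG$ denotes the group ring. *)

theory Defs
  imports "HOL-Library.Poly_Mapping"
begin

definition unit_elem :: "'a::ring_1 \<Rightarrow> bool" where
  "unit_elem x \<longleftrightarrow> (\<exists>y. x * y = 1 \<and> y * x = 1)"

definition Units_set :: "'a::ring_1 set" where
  "Units_set = {x. unit_elem x}"

definition Delta :: "'a::ring_1 set" where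
  "Delta = {x. \<forall>u \<in> Units_set. x + u \<in> Units_set}"

definition Tr :: "'a::ring_1 set" where
  "Tr = {x. x ^ 3 = x}"

definition DT_ring :: "'a::ring_1 itself \<Rightarrow> bool" where
  "DT_ring _ \<longleftrightarrow> (\<forall>r::'a. \<exists>e d. r = e + d \<and> e \<in> Tr \<and> d \<in> Delta)"

text \<open>The group ring RG: finitely supported functions G \<Rightarrow> R with convolution product
  (Poly_Mapping), the group G being written additively (class group_add, not necessarily abelian).\<close>
type_synonym ('g, 'r) group_ring = "'g \<Rightarrow>\<^sub>0 'r"

end

theory Submission
  imports Defs
begin

definition aug :: "('g::monoid_add \<Rightarrow>\<^sub>0 'r::ring_1) \<Rightarrow> 'r" where
  "aug p = (\<Sum>k\<in>Poly_Mapping.keys p. Poly_Mapping.lookup p k)"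

lemma aug_add: "aug (p + q) = aug p + aug q"
  unfolding aug_def by (rule setsum_keys_plus_distrib) auto

lemma aug_zero: "aug 0 = 0"
  unfolding aug_def by simp

lemma aug_sum: "finite A \<Longrightarrow> aug (sum f A) = (\<Sum>x\<in>A. aug (f x))"
  by (induction A rule: finite_induct) (auto simp: aug_zero aug_add)

lemma aug_single: "aug (Poly_Mapping.single k a) = a"
  unfolding aug_def by (cases "a = 0") auto

lemma pm_expand: "p = (\<Sum>k\<in>Poly_Mapping.keys p. Poly_Mapping.single k (Poly_Mapping.lookup p k))"
proof (rule poly_mapping_eqI)
  fix x
  show "Poly_Mapping.lookup p x = Poly_Mapping.lookup (\<Sum>k\<in>Poly_Mapping.keys p. Poly_Mapping.single k (Poly_Mapping.lookup p k)) x"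
    by (simp add: lookup_sum lookup_single when_def in_keys_iff)
qed

lemma aug_mult: "aug (p * q) = aug p * aug (q :: 'g::monoid_add \<Rightarrow>\<^sub>0 'r::ring_1)"
proof -
  let ?P = "\<lambda>k. Poly_Mapping.single k (Poly_Mapping.lookup p k)"
  let ?Q = "\<lambda>k. Poly_Mapping.single k (Poly_Mapping.lookup q k)"
  have "p * q = (\<Sum>k\<in>Poly_Mapping.keys p. ?P k) * (\<Sum>l\<in>Poly_Mapping.keys q. ?Q l)"
    using pm_expand[of p] pm_expand[of q] by simp
  also have "\<dots> = (\<Sum>k\<in>Poly_Mapping.keys p. \<Sum>l\<in>Poly_Mapping.keys q. ?P k * ?Q l)"
    by (simp add: sum_distrib_left sum_distrib_right sum.swap[of _ "Poly_Mapping.keys q"])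
  finally have "aug (p * q) = (\<Sum>k\<in>Poly_Mapping.keys p. \<Sum>l\<in>Poly_Mapping.keys q. aug (?P k * ?Q l))"
    by (simp add: aug_sum)
  also have "\<dots> = (\<Sum>k\<in>Poly_Mapping.keys p. \<Sum>l\<in>Poly_Mapping.keys q. Poly_Mapping.lookup p k * Poly_Mapping.lookup q l)"
    by (simp add: mult_single aug_single)
  also have "\<dots> = aug p * aug q"
    by (simp add: aug_def sum_distrib_left sum_distrib_right sum.swap[of _ "Poly_Mapping.keys q"])
  finally show ?thesis .
qed

lemma aug_one: "aug (1 :: 'g::monoid_add \<Rightarrow>\<^sub>0 'r::ring_1) = 1"
  using aug_single[of 0 "1::'r"] by simp

lemma aug_pow3: "aug (x ^ 3) = aug x ^ 3"
  by (simp add: power3_eq_cube aug_mult)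

theorem lemma3p6:
  assumes "DT_ring TYPE(('g::group_add, 'r::ring_1) group_ring)"
  shows "DT_ring TYPE('r)"
  unfolding DT_ring_def
proof
  fix r :: 'r
  let ?c = "\<lambda>a. Poly_Mapping.single (0::'g) a"
  obtain e d where ed: "?c r = e + d" "e \<in> Tr" "d \<in> Delta"
    using assms unfolding DT_ring_def by blast
  have "r = aug e + aug d" using ed(1) aug_single[of "0::'g" r] by (simp add: aug_add)
  moreover have "aug e \<in> Tr" using ed(2) by (simp add: Tr_def flip: aug_pow3)
  moreover have "aug d \<in> Delta"
    unfolding Delta_def
  proof (intro CollectI ballI)
    fix u :: 'r assume "u \<in> Units_set"
    then obtain v where v: "u * v = 1" "v * u = 1" by (auto simp: Units_set_def unit_elem_def)
    have "?c u * ?c v = 1" "?c v * ?c u = 1" using v by (simp_all add: mult_single)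
    hence "?c u \<in> Units_set" by (auto simp: Units_set_def unit_elem_def)
    hence "d + ?c u \<in> Units_set" using ed(3) by (auto simp: Delta_def)
    then obtain w where w: "(d + ?c u) * w = 1" "w * (d + ?c u) = 1"
      by (auto simp: Units_set_def unit_elem_def)
    have "(aug d + u) * aug w = 1" "aug w * (aug d + u) = 1"
      using arg_cong[OF w(1), of aug] arg_cong[OF w(2), of aug]
      by (simp_all add: aug_mult aug_add aug_single aug_one)
    thus "aug d + u \<in> Units_set" by (auto simp: Units_set_def unit_elem_def)
  qed
  ultimately show "\<exists>e d. r = e + d \<and> e \<in> Tr \<and> d \<in> Delta" by blast
qed

end
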